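(* Let $(k_n)$ be a nondecreasing integer sequence, $(V^*_n)$ vertices of interest, and $\mathbf{\Phi}=(\Phi_n)$ a VN rule, and let $h_{\Phi_n}(g_1,\mathfrak{o}_n(g_2),V^*_n)=\sum_{v\in V^*_n}\mathbf{1}\{\mathrm{rank}_{\Phi_n(g_1,\mathfrak{o}_n(g_2),V^*_n)}(\mathfrak{o}_n(v))\le k_n\}$. Let $(\hat h_{\Phi_n})_n$ be any sequence of label-agnostic estimators of $(h_{\Phi_n})_n$, i.e. satisfying $\hat h_{\Phi_n}(g_1,\mathfrak{o}_n(g_2),V^*_n)=\hat h_{\Phi_n}(g_1,\mathfrak{o}_n(g_2'),V^*_n)$ whenever $g_2\simeq g_2'$ (graph isomorphism). Then there exist sequences of nested-core nominatable distributions $\mathbf{F}=(F_n)$ and $\mathbf{F}'=(F_n')$ such that for all $n$ sufficiently large, if $(G_1,G_2)\sim F_n$ and $(G_1',G_2')\sim F_n'$, then $d_{\mathrm{TV}}\big(\mathcal{L}(h_{\Phi_n}(G_1,\mathfrak{o}(G_2),V^*_n)),\mathcal{L}(h_{\Phi_n}(G_1',\mathfrak{o}(G_2'),V^*_n))\big)>0$, while $\mathcal{L}(\hat h_{\Phi_n}(G_1,\mathfrak{o}(G_2),V^*_n))=\mathcal{L}(\hat h_{\Phi_n}(G_1',\mathfrak{o}(G_2'),V^*_n))$.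
   Context: $\mathcal{L}(X)$ denotes the law of $X$ and $d_{\mathrm{TV}}$ total variation distance. $\mathcal{G}_n$ denotes labeled graphs on $n$ vertices. A nominatable distribution of order $(n,m)$ is a distribution on $\mathcal{G}_n\times\mathcal{G}_m$ with vertex sets $V_1=\{v_1,\dots,v_n\}$, $V_2=\{u_1,\dots,u_m\}$, $v_i=u_i$ for $i\le c$ (core $C$), disjoint junk sets $J_1=V_1\setminus C$, $J_2=V_2\setminus C$, and $G_1[J_1]$, $G_2[J_2]$ conditionally independent given the parameter. A sequence of such distributions has nested cores if eventually the vertex sets of the first graphs, of the second graphs, and the cores are increasing in $n$. An obfuscating function is a bijection $\mathfrak{o}$ from $V_2$ onto a set $W$ disjoint from $V_1,V_2$. For $u\in V(g)$, $\mathcal{I}(u;g)$ is the orbit of $u$ under automorphisms of $g$. A VN scheme $\Phi_n$ maps $(g_1,\mathfrak{o}(g_2),V^* )$ with $V^*\subset V_1$ to a total ordering of $W$, such that the set of positions of $\mathfrak{o}(\mathcal{I}(u;g_2))$ does not depend on the choice of obfuscating function $\mathfrak{o}$ (for every $g_1,g_2,V^*,u$); $\mathrm{rank}(\cdot)$ denotes position in this ordering. A VN rule is a sequence of VN schemes. *)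

theory Defs
  imports "HOL-Probability.Probability"
begin

type_synonym graph = "nat set \<times> (nat \<times> nat) set"

definition wf_graph :: "graph \<Rightarrow> bool" where
  "wf_graph g \<longleftrightarrow> finite (fst g) \<and> snd g \<subseteq> fst g \<times> fst g \<and> sym (snd g)
     \<and> (\<forall>x. (x, x) \<notin> snd g)"

definition induced :: "graph \<Rightarrow> nat set \<Rightarrow> graph" where
  "induced g S = (S, snd g \<inter> (S \<times> S))"

definition relabel :: "(nat \<Rightarrow> nat) \<Rightarrow> graph \<Rightarrow> graph" where
  "relabel f g = (f ` fst g, map_prod f f ` snd g)"

definition graph_iso :: "graph \<Rightarrow> graph \<Rightarrow> bool" where
  "graph_iso g g' \<longleftrightarrow> (\<exists>f. bij_betw f (fst g) (fst g') \<and>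
     (\<forall>x\<in>fst g. \<forall>y\<in>fst g. (x, y) \<in> snd g \<longleftrightarrow> (f x, f y) \<in> snd g'))"

definition orbit :: "nat \<Rightarrow> graph \<Rightarrow> nat set" where
  "orbit u g = {f u | f. bij_betw f (fst g) (fst g) \<and>
     (\<forall>x\<in>fst g. \<forall>y\<in>fst g. (x, y) \<in> snd g \<longleftrightarrow> (f x, f y) \<in> snd g)}"

definition obfuscating :: "(nat \<Rightarrow> nat) \<Rightarrow> nat set \<Rightarrow> nat set \<Rightarrow> bool" where
  "obfuscating ob V1 V2 \<longleftrightarrow> inj_on ob V2 \<and> ob ` V2 \<inter> V1 = {} \<and> ob ` V2 \<inter> V2 = {}"

text \<open>A total ordering of W is a list enumerating W without repetition; rank is the
  (1-based) position.\<close>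
definition total_ordering :: "nat list \<Rightarrow> nat set \<Rightarrow> bool" where
  "total_ordering xs W \<longleftrightarrow> distinct xs \<and> set xs = W"

definition rank :: "nat list \<Rightarrow> nat \<Rightarrow> nat" where
  "rank xs w = Suc (LEAST i. i < length xs \<and> xs ! i = w)"

definition vn_scheme :: "(graph \<Rightarrow> graph \<Rightarrow> nat set \<Rightarrow> nat list) \<Rightarrow> bool" where
  "vn_scheme \<Phi> \<longleftrightarrow> (\<forall>g1 g2 Vs ob. wf_graph g1 \<and> wf_graph g2 \<and> Vs \<subseteq> fst g1
      \<and> obfuscating ob (fst g1) (fst g2) \<longrightarrow>
        total_ordering (\<Phi> g1 (relabel ob g2) Vs) (ob ` fst g2) \<and>
        (\<forall>ob' u. obfuscating ob' (fst g1) (fst g2) \<and> u \<in> fst g2 \<longrightarrow>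
           (\<lambda>x. rank (\<Phi> g1 (relabel ob g2) Vs) (ob x)) ` orbit u g2
         = (\<lambda>x. rank (\<Phi> g1 (relabel ob' g2) Vs) (ob' x)) ` orbit u g2))"

definition h_count :: "(graph \<Rightarrow> graph \<Rightarrow> nat set \<Rightarrow> nat list) \<Rightarrow> int \<Rightarrow> nat set
    \<Rightarrow> graph \<Rightarrow> (nat \<Rightarrow> nat) \<Rightarrow> graph \<Rightarrow> nat" where
  "h_count \<Phi> k Vs g1 ob g2 = card {v \<in> Vs. int (rank (\<Phi> g1 (relabel ob g2) Vs) (ob v)) \<le> k}"

definition label_agnostic :: "(nat \<Rightarrow> graph \<Rightarrow> graph \<Rightarrow> nat set \<Rightarrow> 'b) \<Rightarrow> (nat \<Rightarrow> nat set) \<Rightarrow> bool" where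
  "label_agnostic hh Vs \<longleftrightarrow> (\<forall>n g1 g2 g2' ob. wf_graph g1 \<and> wf_graph g2 \<and> wf_graph g2'
      \<and> fst g2' = fst g2 \<and> graph_iso g2 g2' \<and> obfuscating ob (fst g1) (fst g2) \<longrightarrow>
      hh n g1 (relabel ob g2) (Vs n) = hh n g1 (relabel ob g2') (Vs n))"

text \<open>Nominatable distribution with first vertex set V1 and second vertex set V2
  (order (card V1, card V2)); core C = V1 \<inter> V2, junk J1 = V1 - C, J2 = V2 - C.
  Conditional independence of G1[J1], G2[J2] given a (latent, countable) parameter.\<close>
definition nominatable :: "(graph \<times> graph) pmf \<Rightarrow> nat set \<Rightarrow> nat set \<Rightarrow> bool" where
  "nominatable F V1 V2 \<longleftrightarrow> finite V1 \<and> finite V2 \<and>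
     (\<forall>p\<in>set_pmf F. wf_graph (fst p) \<and> wf_graph (snd p) \<and> fst (fst p) = V1 \<and> fst (snd p) = V2) \<and>
     (\<exists>(\<Theta> :: nat pmf) K. F = bind_pmf \<Theta> K \<and>
        (\<forall>\<theta>\<in>set_pmf \<Theta>.
           map_pmf (\<lambda>p. (induced (fst p) (V1 - V2), induced (snd p) (V2 - V1))) (K \<theta>)
         = pair_pmf (map_pmf (\<lambda>p. induced (fst p) (V1 - V2)) (K \<theta>))
                    (map_pmf (\<lambda>p. induced (snd p) (V2 - V1)) (K \<theta>))))"

definition nested_cores :: "(nat \<Rightarrow> nat set) \<Rightarrow> (nat \<Rightarrow> nat set) \<Rightarrow> bool" where
  "nested_cores V1 V2 \<longleftrightarrow> (\<exists>N. \<forall>n\<ge>N. V1 n \<subseteq> V1 (Suc n) \<and> V2 n \<subseteq> V2 (Suc n)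
      \<and> V1 n \<inter> V2 n \<subseteq> V1 (Suc n) \<inter> V2 (Suc n))"

definition tv_dist :: "'a pmf \<Rightarrow> 'a pmf \<Rightarrow> real" where
  "tv_dist p q = (SUP A. \<bar>measure_pmf.prob p A - measure_pmf.prob q A\<bar>)"

end

theory Submission
  imports Defs
begin


definition sadj :: "nat \<Rightarrow> nat \<Rightarrow> nat \<Rightarrow> bool" where
  "sadj M i j \<longleftrightarrow> (j = Suc i \<and> Suc i < M - 1) \<or> (i = Suc j \<and> Suc j < M - 1)
     \<or> (i = 2 \<and> j = M - 1) \<or> (i = M - 1 \<and> j = 2)"

definition spider :: "nat \<Rightarrow> graph" where
  "spider M = ({0..<M}, {(i,j). sadj M i j})"

lemma spider_wf: "7 \<le> M \<Longrightarrow> wf_graph (spider M)"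
  unfolding wf_graph_def spider_def sym_def sadj_def by auto

lemma sadj_lt: "7 \<le> M \<Longrightarrow> sadj M i j \<Longrightarrow> i < M \<and> j < M"
  unfolding sadj_def by auto

definition nb :: "nat \<Rightarrow> nat \<Rightarrow> nat set" where
  "nb M v = {w. sadj M v w}"

lemma nb_0: "7 \<le> M \<Longrightarrow> nb M 0 = {1}" unfolding nb_def sadj_def by auto
lemma nb_1: "7 \<le> M \<Longrightarrow> nb M 1 = {0,2}" unfolding nb_def sadj_def by auto
lemma nb_2: "7 \<le> M \<Longrightarrow> nb M 2 = {1,3,M-1}" unfolding nb_def sadj_def by auto
lemma nb_mid: "7 \<le> M \<Longrightarrow> 3 \<le> i \<Longrightarrow> i \<le> M - 3 \<Longrightarrow> nb M i = {i-1,i+1}"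
  unfolding nb_def sadj_def by auto
lemma nb_Mm2: "7 \<le> M \<Longrightarrow> nb M (M-2) = {M-3}" unfolding nb_def sadj_def by auto
lemma nb_Mm1: "7 \<le> M \<Longrightarrow> nb M (M-1) = {2}" unfolding nb_def sadj_def by auto

lemma card_nb: assumes "7 \<le> M" "v < M"
  shows "card (nb M v) = (if v = 2 then 3 else if v = 0 \<or> v = M - 2 \<or> v = M - 1 then 1 else 2)"
proof -
  consider "v = 0" | "v = 1" | "v = 2" | "3 \<le> v \<and> v \<le> M - 3" | "v = M - 2" | "v = M - 1"
    using assms by linarith
  then show ?thesis
  proof cases
    case 4 then show ?thesis using assms nb_mid[of M v] by auto
  qed (use assms nb_0 nb_1 nb_2 nb_Mm2 nb_Mm1 in auto)
qed

lemma auto_nb: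
  assumes M: "7 \<le> M" and bij: "bij_betw f {0..<M} {0..<M}"
    and adj: "\<forall>x\<in>{0..<M}. \<forall>y\<in>{0..<M}. sadj M x y \<longleftrightarrow> sadj M (f x) (f y)"
    and v: "v < M"
  shows "nb M (f v) = f ` nb M v"
proof
  show "f ` nb M v \<subseteq> nb M (f v)"
  proof
    fix z assume "z \<in> f ` nb M v"
    then obtain w where w: "w \<in> nb M v" "z = f w" by auto
    then have "w < M" using sadj_lt[OF M] unfolding nb_def by auto
    then show "z \<in> nb M (f v)" using adj v w unfolding nb_def by auto
  qed
next
  show "nb M (f v) \<subseteq> f ` nb M v"
  proof
    fix z assume z: "z \<in> nb M (f v)"
    then have "z < M" using sadj_lt[OF M] unfolding nb_def by auto
    then obtain w where w: "w < M" "z = f w" using bij unfolding bij_betw_def by force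
    then have "sadj M v w" using adj v z unfolding nb_def by auto
    then show "z \<in> f ` nb M v" using w unfolding nb_def by auto
  qed
qed

lemma auto_card:
  assumes M: "7 \<le> M" and bij: "bij_betw f {0..<M} {0..<M}"
    and adj: "\<forall>x\<in>{0..<M}. \<forall>y\<in>{0..<M}. sadj M x y \<longleftrightarrow> sadj M (f x) (f y)"
    and v: "v < M"
  shows "card (nb M (f v)) = card (nb M v)"
proof -
  have "nb M v \<subseteq> {0..<M}" using sadj_lt[OF M] unfolding nb_def by auto
  then have "inj_on f (nb M v)" using bij unfolding bij_betw_def by (meson inj_on_subset)
  then show ?thesis using auto_nb[OF assms] by (simp add: card_image)
qed

lemma card3: "7 \<le> M \<Longrightarrow> v < M \<Longrightarrow> card (nb M v) = 3 \<longleftrightarrow> v = 2"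
  using card_nb[of M v] by auto
lemma card1: "7 \<le> M \<Longrightarrow> v < M \<Longrightarrow> card (nb M v) = 1 \<longleftrightarrow> v = 0 \<or> v = M - 2 \<or> v = M - 1"
  using card_nb[of M v] by auto

lemma spider_rigid:
  assumes M: "7 \<le> M" and bij: "bij_betw f {0..<M} {0..<M}"
    and adj: "\<forall>x\<in>{0..<M}. \<forall>y\<in>{0..<M}. sadj M x y \<longleftrightarrow> sadj M (f x) (f y)"
  shows "\<forall>x<M. f x = x"
proof -
  have fM: "\<And>x. x < M \<Longrightarrow> f x < M" using bij unfolding bij_betw_def by auto
  have inj: "\<And>x y. x < M \<Longrightarrow> y < M \<Longrightarrow> f x = f y \<Longrightarrow> x = y"
    using bij unfolding bij_betw_def inj_on_def by auto
  have cd: "\<And>v. v < M \<Longrightarrow> card (nb M (f v)) = card (nb M v)"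
    using auto_card[OF M bij adj] .
  have nbf: "\<And>v. v < M \<Longrightarrow> nb M (f v) = f ` nb M v" using auto_nb[OF M bij adj] .
  have M2: "2 < M" "1 < M" "3 < M" "0 < M" "M - 1 < M" "4 < M" using M by auto
  have f2: "f 2 = 2"
  proof -
    have "card (nb M 2) = 3" using card3[OF M M2(1)] by simp
    then have "card (nb M (f 2)) = 3" using cd[OF M2(1)] by simp
    then show ?thesis using card3[OF M fM[OF M2(1)]] by simp
  qed
  have N2: "f ` {1,3,M-1} = {1,3,M-1}"
  proof -
    have "f ` nb M 2 = nb M (f 2)" using nbf[OF M2(1)] by simp
    also have "\<dots> = nb M 2" using f2 by simp
    finally show ?thesis unfolding nb_2[OF M] .
  qed
  have fMm1: "f (M-1) = M-1"
  proof -
    have a: "f (M-1) \<in> {1,3,M-1}" using N2 by auto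
    have "card (nb M (M-1)) = 1" using card1[OF M M2(5)] by simp
    then have b: "card (nb M (f (M-1))) = 1" using cd[OF M2(5)] by simp
    have "card (nb M 1) \<noteq> 1" using card1[OF M M2(2)] M by auto
    moreover have "card (nb M 3) \<noteq> 1" using card1[OF M M2(3)] M by auto
    ultimately show ?thesis using a b by auto
  qed
  have f1: "f 1 = 1"
  proof -
    have "f 1 \<in> {1,3,M-1}" using N2 by auto
    moreover have "f 1 \<noteq> M - 1" using fMm1 inj[OF M2(2) M2(5)] M by auto
    moreover have "f 1 \<noteq> 3"
    proof
      assume h: "f 1 = 3"
      have "f 0 \<in> nb M (f 1)" using nbf[OF M2(2)] nb_1[OF M] by simp
      then have c: "f 0 \<in> {2,4}" using h nb_mid[OF M, of 3] M by simp
      have "card (nb M 0) = 1" using card1[OF M M2(4)] by simp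
      then have d: "card (nb M (f 0)) = 1" using cd[OF M2(4)] by simp
      have "card (nb M 2) \<noteq> 1" using card1[OF M M2(1)] M by auto
      moreover have "card (nb M 4) \<noteq> 1" using card1[OF M M2(6)] M by auto
      ultimately show False using c d by auto
    qed
    ultimately show ?thesis by auto
  qed
  have f3: "f 3 = 3"
  proof -
    have "f 3 \<in> {1,3,M-1}" using N2 by auto
    moreover have "f 3 \<noteq> 1" using f1 inj[OF M2(3) M2(2)] by auto
    moreover have "f 3 \<noteq> M-1" using fMm1 inj[OF M2(3) M2(5)] M by auto
    ultimately show ?thesis by auto
  qed
  have f0: "f 0 = 0"
  proof -
    have "f 0 \<in> nb M (f 1)" using nbf[OF M2(2)] nb_1[OF M] by simp
    then have "f 0 \<in> {0,2}" using f1 nb_1[OF M] by simp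
    moreover have "f 0 \<noteq> 2" using f2 inj[OF M2(4) M2(1)] by auto
    ultimately show ?thesis by auto
  qed
  have step: "\<And>i. 3 \<le> i \<Longrightarrow> i \<le> M - 2 \<Longrightarrow> f i = i \<and> f (i - 1) = i - 1"
  proof -
    fix i assume "3 \<le> i" "i \<le> M - 2"
    then show "f i = i \<and> f (i - 1) = i - 1"
    proof (induction i rule: dec_induct)
      case base then show ?case using f3 f2 by simp
    next
      case (step j)
      have jM: "j < M" "Suc j < M" "j - 1 < M" using step M by auto
      have nbj: "nb M j = {j-1, j+1}" using nb_mid[OF M, of j] step by simp
      have "f (Suc j) \<in> nb M (f j)" using nbf[OF jM(1)] nbj by simp
      then have "f (Suc j) \<in> {j-1, j+1}" using step nbj by simp
      moreover have "f (Suc j) \<noteq> f (j - 1)" using inj[OF jM(2) jM(3)] step by auto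
      ultimately show ?case using step by auto
    qed
  qed
  show ?thesis
  proof (intro allI impI)
    fix x assume "x < M"
    then consider "x = 0" | "x = 1" | "x = 2" | "3 \<le> x \<and> x \<le> M - 2" | "x = M - 1" by linarith
    then show "f x = x"
    proof cases
      case 4 then show ?thesis using step by blast
    qed (use f0 f1 f2 fMm1 in auto)
  qed
qed

lemma orbit_spider: assumes "7 \<le> M" "u < M" shows "orbit u (spider M) = {u}"
proof -
  have "id u \<in> orbit u (spider M)" unfolding orbit_def spider_def by (auto intro!: exI[of _ id])
  moreover have "orbit u (spider M) \<subseteq> {u}"
    using spider_rigid[OF assms(1)] assms(2) unfolding orbit_def spider_def by auto
  ultimately show ?thesis by auto
qed



lemma relabel_comp: "relabel f (relabel g G) = relabel (f \<circ> g) G"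
  unfolding relabel_def by (simp add: image_comp map_prod.comp)

lemma wf_relabel:
  assumes "wf_graph g" "inj_on f (fst g)"
  shows "wf_graph (relabel f g)"
  using assms unfolding wf_graph_def relabel_def sym_def inj_on_def by fastforce

lemma iso_relabel:
  assumes "wf_graph g" "inj_on f (fst g)"
  shows "graph_iso g (relabel f g)"
  unfolding graph_iso_def
proof (intro exI conjI)
  show "bij_betw f (fst g) (fst (relabel f g))" using assms(2) unfolding relabel_def bij_betw_def by simp
  show "\<forall>x\<in>fst g. \<forall>y\<in>fst g. ((x, y) \<in> snd g) = ((f x, f y) \<in> snd (relabel f g))"
  proof (intro ballI)
    fix x y assume xy: "x \<in> fst g" "y \<in> fst g"
    have "(f x, f y) \<in> map_prod f f ` snd g \<Longrightarrow> (x, y) \<in> snd g"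
    proof -
      assume "(f x, f y) \<in> map_prod f f ` snd g"
      then obtain a b where ab: "(a,b) \<in> snd g" "f a = f x" "f b = f y" by auto
      then have "a \<in> fst g" "b \<in> fst g" using assms(1) unfolding wf_graph_def by auto
      then have "a = x" "b = y" using ab xy assms(2) unfolding inj_on_def by auto
      then show ?thesis using ab by simp
    qed
    then show "((x, y) \<in> snd g) = ((f x, f y) \<in> snd (relabel f g))"
      unfolding relabel_def by force
  qed
qed

lemma rank_nth: "distinct xs \<Longrightarrow> i < length xs \<Longrightarrow> rank xs (xs ! i) = Suc i"
  unfolding rank_def
  by (rule arg_cong[where f=Suc], rule Least_equality) (auto simp: nth_eq_iff_index_eq)

definition swp :: "nat \<Rightarrow> nat \<Rightarrow> nat \<Rightarrow> nat" where
  "swp a b x = (if x = a then b else if x = b then a else x)"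

lemma swp_inv: "swp a b (swp a b x) = x" unfolding swp_def by auto
lemma swp_inj: "inj_on (swp a b) S" unfolding inj_on_def swp_def by auto
lemma swp_image: "a \<in> S \<Longrightarrow> b \<in> S \<Longrightarrow> swp a b ` S = S"
  unfolding swp_def by (auto simp: image_iff)

lemma card_diff_one:
  assumes "finite S" "a \<in> S" "\<forall>v\<in>S-{a}. P v = Q v" "P a \<noteq> Q a"
  shows "card {v\<in>S. P v} \<noteq> card {v\<in>S. Q v}"
proof (cases "P a")
  case True
  then have "{v\<in>S. P v} = insert a {v\<in>S. Q v}" "a \<notin> {v\<in>S. Q v}" using assms by auto
  then show ?thesis using assms(1) by simp
next
  case False
  then have "{v\<in>S. Q v} = insert a {v\<in>S. P v}" "a \<notin> {v\<in>S. P v}" using assms by auto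
  then show ?thesis using assms(1) by simp
qed

lemma key:
  fixes \<Phi> :: "graph \<Rightarrow> graph \<Rightarrow> nat set \<Rightarrow> nat list" and k :: int
  assumes M: "7 \<le> M" and Vs: "Vs \<subseteq> {0..<M-1}" "Vs \<noteq> {}" and kM: "k < int M"
    and k1: "1 \<le> k" and vn: "vn_scheme \<Phi>"
  shows "\<exists>g2'. wf_graph g2' \<and> fst g2' = {0..<M} \<and> graph_iso (spider M) g2' \<and>
     (\<forall>ob. obfuscating ob {0..<M} {0..<M} \<longrightarrow>
        h_count \<Phi> k Vs ({0..<M},{}) ob (spider M) \<noteq> h_count \<Phi> k Vs ({0..<M},{}) ob g2')"
proof -
  define V where "V = {0..<M}"
  define g1 where "g1 = (V, {}::(nat\<times>nat) set)"
  define g2 where "g2 = spider M"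
  have wf1: "wf_graph g1" unfolding wf_graph_def g1_def V_def sym_def by simp
  have wf2: "wf_graph g2" using spider_wf[OF M] unfolding g2_def .
  have fst1: "fst g1 = V" and fst2: "fst g2 = V" unfolding g1_def g2_def spider_def V_def by auto
  have VsV: "Vs \<subseteq> V" using Vs unfolding V_def by auto
  define ob0 where "ob0 = (\<lambda>x::nat. x + M)"
  have ob0: "obfuscating ob0 V V" unfolding obfuscating_def ob0_def V_def inj_on_def by auto
  define L0 where "L0 = \<Phi> g1 (relabel ob0 g2) Vs"
  define r where "r u = rank L0 (ob0 u)" for u
  have pre: "wf_graph g1 \<and> wf_graph g2 \<and> Vs \<subseteq> fst g1 \<and> obfuscating ob0 (fst g1) (fst g2)"
    using wf1 wf2 VsV ob0 fst1 fst2 by simp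
  note vn0 = mp[OF spec[OF spec[OF spec[OF spec[OF vn[unfolded vn_scheme_def], of g1], of g2], of Vs], of ob0] pre]
  have tot0: "total_ordering L0 (ob0 ` V)" using conjunct1[OF vn0] fst2 unfolding L0_def by simp
  have inv0: "(\<lambda>x. rank L0 (ob0 x)) ` orbit u g2
         = (\<lambda>x. rank (\<Phi> g1 (relabel ob' g2) Vs) (ob' x)) ` orbit u g2"
    if "obfuscating ob' V V" "u \<in> V" for ob' u
    using spec[OF spec[OF conjunct2[OF vn0], of ob'], of u] that fst1 fst2 unfolding L0_def by simp
  have inv: "rank (\<Phi> g1 (relabel ob g2) Vs) (ob u) = r u" if "obfuscating ob V V" "u \<in> V" for ob u
  proof -
    have "orbit u g2 = {u}" using orbit_spider[OF M] that(2) unfolding g2_def V_def by simp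
    then show ?thesis using inv0[OF that] unfolding r_def by auto
  qed
  have dist: "distinct L0" and setL: "set L0 = ob0 ` V" using tot0 unfolding total_ordering_def by auto
  have "card (ob0 ` V) = M" using ob0 unfolding obfuscating_def V_def by (simp add: card_image)
  then have len: "length L0 = M" using distinct_card[OF dist] setL by simp
  have "\<exists>u\<in>V. r u = Suc i" if "i < M" for i
  proof -
    have "L0 ! i \<in> ob0 ` V" using setL len that nth_mem by metis
    then obtain u where u: "u \<in> V" "L0 ! i = ob0 u" by auto
    then have "r u = Suc i" unfolding r_def using rank_nth[OF dist] len that by metis
    then show ?thesis using u by blast
  qed
  then obtain u0 u1 where u0: "u0 \<in> V" "r u0 = 1" and u1: "u1 \<in> V" "r u1 = M"
    using M by (metis One_nat_def Suc_pred' diff_less less_le_trans zero_less_numeral zero_less_one)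
  have "\<exists>a\<in>Vs. \<exists>b\<in>V-Vs. (int (r a) \<le> k) \<noteq> (int (r b) \<le> k)"
  proof (rule ccontr)
    assume "\<not> ?thesis"
    then have H: "\<forall>a\<in>Vs. \<forall>b\<in>V-Vs. (int (r a) \<le> k) = (int (r b) \<le> k)" by blast
    obtain a0 where a0: "a0 \<in> Vs" using Vs by auto
    have b0: "M - 1 \<in> V - Vs" using Vs M unfolding V_def by auto
    have all: "(int (r u) \<le> k) = (int (r a0) \<le> k)" if "u \<in> V" for u
    proof (cases "u \<in> Vs")
      case True then show ?thesis using H a0 b0 by metis
    next
      case False then show ?thesis using H a0 that by auto
    qed
    show False using all[OF u0(1)] all[OF u1(1)] u0(2) u1(2) k1 kM by simp
  qed
  then obtain a b where ab: "a \<in> Vs" "b \<in> V - Vs" "(int (r a) \<le> k) \<noteq> (int (r b) \<le> k)" by blast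
  define \<sigma> where "\<sigma> = swp a b"
  have aV: "a \<in> V" using ab VsV by auto
  have bV: "b \<in> V" using ab by auto
  have \<sigma>V: "\<sigma> ` V = V" unfolding \<sigma>_def using swp_image aV bV by simp
  have \<sigma>inj: "inj_on \<sigma> V" unfolding \<sigma>_def by (rule swp_inj)
  define g2' where "g2' = relabel \<sigma> g2"
  have wf2': "wf_graph g2'" unfolding g2'_def using wf_relabel[OF wf2] \<sigma>inj fst2 by simp
  have fst2': "fst g2' = V" unfolding g2'_def relabel_def using \<sigma>V fst2 by simp
  have iso: "graph_iso g2 g2'" unfolding g2'_def using iso_relabel[OF wf2] \<sigma>inj fst2 by simp
  have hdiff: "h_count \<Phi> k Vs g1 ob g2 \<noteq> h_count \<Phi> k Vs g1 ob g2'" if obf: "obfuscating ob V V" for ob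
  proof -
    have h1: "h_count \<Phi> k Vs g1 ob g2 = card {v\<in>Vs. int (r v) \<le> k}"
      unfolding h_count_def using inv[OF obf] VsV by (intro arg_cong[where f=card]) auto
    have obs: "obfuscating (ob \<circ> \<sigma>) V V"
    proof -
      have im: "(ob \<circ> \<sigma>) ` V = ob ` V" using image_comp[of ob \<sigma> V] \<sigma>V by simp
      have "inj_on (ob \<circ> \<sigma>) V" using obf \<sigma>V \<sigma>inj unfolding obfuscating_def
        by (intro comp_inj_on) auto
      then show ?thesis using obf im unfolding obfuscating_def by simp
    qed
    have h2: "h_count \<Phi> k Vs g1 ob g2' = card {v\<in>Vs. int (r (\<sigma> v)) \<le> k}"
    proof -
      have "rank (\<Phi> g1 (relabel ob g2') Vs) (ob v) = r (\<sigma> v)" if "v \<in> Vs" for v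
      proof -
        have "\<sigma> v \<in> V" using that VsV \<sigma>V by auto
        moreover have "ob v = (ob \<circ> \<sigma>) (\<sigma> v)" unfolding \<sigma>_def by (simp add: swp_inv)
        ultimately show ?thesis unfolding g2'_def relabel_comp using inv[OF obs] by simp
      qed
      then show ?thesis unfolding h_count_def by (intro arg_cong[where f=card]) auto
    qed
    have fin: "finite Vs" using VsV unfolding V_def using finite_subset by blast
    have X: "\<forall>v\<in>Vs-{a}. (int (r v) \<le> k) = (int (r (\<sigma> v)) \<le> k)"
      using ab unfolding \<sigma>_def swp_def by auto
    have Y: "(int (r a) \<le> k) \<noteq> (int (r (\<sigma> a)) \<le> k)"
      using ab unfolding \<sigma>_def swp_def by auto
    show ?thesis unfolding h1 h2
      by (rule card_diff_one[where P="\<lambda>v. int (r v) \<le> k" and Q="\<lambda>v. int (r (\<sigma> v)) \<le> k", OF fin ab(1) X Y])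
  qed
  show ?thesis
  proof (rule exI[of _ g2'], intro conjI allI impI)
    show "wf_graph g2'" by (rule wf2')
    show "fst g2' = {0..<M}" using fst2' unfolding V_def .
    show "graph_iso (spider M) g2'" using iso unfolding g2_def .
    fix ob assume "obfuscating ob {0..<M} {0..<M}"
    then show "h_count \<Phi> k Vs ({0..<M}, {}) ob (spider M) \<noteq> h_count \<Phi> k Vs ({0..<M}, {}) ob g2'"
      using hdiff unfolding g1_def g2_def V_def by blast
  qed
qed



lemma nom_return:
  assumes "finite V1" "finite V2" "wf_graph a" "wf_graph b" "fst a = V1" "fst b = V2"
  shows "nominatable (return_pmf (a,b)) V1 V2"
  unfolding nominatable_def
proof (intro conjI)
  show "\<exists>(\<Theta>::nat pmf) K. return_pmf (a, b) = bind_pmf \<Theta> K \<and>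
     (\<forall>\<theta>\<in>set_pmf \<Theta>.
           map_pmf (\<lambda>p. (induced (fst p) (V1 - V2), induced (snd p) (V2 - V1))) (K \<theta>)
         = pair_pmf (map_pmf (\<lambda>p. induced (fst p) (V1 - V2)) (K \<theta>))
                    (map_pmf (\<lambda>p. induced (snd p) (V2 - V1)) (K \<theta>)))"
    by (rule exI[of _ "return_pmf 0"], rule exI[of _ "\<lambda>_. return_pmf (a,b)"])
       (simp add: bind_return_pmf)
qed (use assms in auto)

lemma tv_pos:
  assumes "x \<noteq> y"
  shows "tv_dist (return_pmf x) (return_pmf y) > 0"
proof -
  have "(1::real) \<le> (SUP A. \<bar>measure_pmf.prob (return_pmf x) A - measure_pmf.prob (return_pmf y) A\<bar>)"
  proof (rule cSUP_upper2[where x="{x}"])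
    show "bdd_above (range (\<lambda>A. \<bar>measure_pmf.prob (return_pmf x) A - measure_pmf.prob (return_pmf y) A\<bar>))"
      by (rule bdd_aboveI[where M=1]) (auto simp: indicator_def)
    show "1 \<le> \<bar>measure_pmf.prob (return_pmf x) {x} - measure_pmf.prob (return_pmf y) {x}\<bar>"
      using assms by simp
  qed simp
  then show ?thesis unfolding tv_dist_def by linarith
qed

theorem lemma1:
  fixes k :: "nat \<Rightarrow> int" and Vs :: "nat \<Rightarrow> nat set"
    and \<Phi> :: "nat \<Rightarrow> graph \<Rightarrow> graph \<Rightarrow> nat set \<Rightarrow> nat list"
    and hh :: "nat \<Rightarrow> graph \<Rightarrow> graph \<Rightarrow> nat set \<Rightarrow> 'b"
  assumes "mono k" and "\<forall>n. k n \<ge> 1"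
    and "\<forall>n. finite (Vs n) \<and> Vs n \<noteq> {}"
    and "\<forall>n. vn_scheme (\<Phi> n)"
    and "label_agnostic hh Vs"
  shows "\<exists>F V1 V2 F' V1' V2'.
     (\<forall>n. nominatable (F n) (V1 n) (V2 n)) \<and> (\<forall>n. nominatable (F' n) (V1' n) (V2' n)) \<and>
     nested_cores V1 V2 \<and> nested_cores V1' V2' \<and>
     (\<exists>N. \<forall>n\<ge>N. Vs n \<subseteq> V1 n \<inter> V2 n \<and> Vs n \<subseteq> V1' n \<inter> V2' n \<and>
        (\<forall>ob. obfuscating ob (V1 n) (V2 n) \<and> obfuscating ob (V1' n) (V2' n) \<longrightarrow>
           tv_dist (map_pmf (\<lambda>p. h_count (\<Phi> n) (k n) (Vs n) (fst p) ob (snd p)) (F n))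
                   (map_pmf (\<lambda>p. h_count (\<Phi> n) (k n) (Vs n) (fst p) ob (snd p)) (F' n)) > 0 \<and>
           map_pmf (\<lambda>p. hh n (fst p) (relabel ob (snd p)) (Vs n)) (F n)
         = map_pmf (\<lambda>p. hh n (fst p) (relabel ob (snd p)) (Vs n)) (F' n)))"
proof -
  define S where "S n = (\<Sum>m\<le>n. Suc (Max (Vs m)))" for n
  define M where "M n = S n + nat (k n) + 7" for n
  define V where "V n = {0..<M n}" for n
  define g1 where "g1 n = (V n, {}::(nat\<times>nat) set)" for n
  define P where "P n g = (wf_graph g \<and> fst g = V n \<and> graph_iso (spider (M n)) g \<and>
     (\<forall>ob. obfuscating ob (V n) (V n) \<longrightarrow>
        h_count (\<Phi> n) (k n) (Vs n) (g1 n) ob (spider (M n)) \<noteq> h_count (\<Phi> n) (k n) (Vs n) (g1 n) ob g))" for n g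
  define G where "G n = (SOME g. P n g)" for n
  define F where "F n = return_pmf (g1 n, spider (M n))" for n
  define F' where "F' n = return_pmf (g1 n, G n)" for n
  have M7: "7 \<le> M n" for n unfolding M_def by simp
  have VsM: "Vs n \<subseteq> {0..<M n - 1}" for n
  proof
    fix x assume x: "x \<in> Vs n"
    have "x \<le> Max (Vs n)" using x assms(3) by simp
    moreover have "Suc (Max (Vs n)) \<le> S n" unfolding S_def
      by (rule member_le_sum[where f="\<lambda>m. Suc (Max (Vs m))"]) auto
    ultimately show "x \<in> {0..<M n - 1}" unfolding M_def by simp
  qed
  have kM: "k n < int (M n)" for n using assms(2) unfolding M_def by (simp add: of_nat_add)
  have PG: "P n (G n)" for n
  proof -
    have "\<exists>g. P n g" using key[OF M7 VsM assms(3)[rule_format, THEN conjunct2] kM assms(2)[rule_format] assms(4)[rule_format]]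
      unfolding P_def g1_def V_def by blast
    then show ?thesis unfolding G_def by (rule someI_ex)
  qed
  have monoM: "M n \<le> M (Suc n)" for n
  proof -
    have "S n \<le> S (Suc n)" unfolding S_def by (rule sum_mono2) auto
    moreover have "k n \<le> k (Suc n)" using assms(1) unfolding mono_def by simp
    ultimately show ?thesis unfolding M_def by simp
  qed
  have nc: "nested_cores V V" unfolding nested_cores_def V_def using monoM
    by (intro exI[of _ 0]) auto
  have wf1: "wf_graph (g1 n)" for n unfolding wf_graph_def g1_def V_def sym_def by simp
  have wf2: "wf_graph (spider (M n))" for n using spider_wf[OF M7] .
  have fst1: "fst (g1 n) = V n" and fst2: "fst (spider (M n)) = V n" for n
    unfolding g1_def spider_def V_def by auto
  have finV: "finite (V n)" for n unfolding V_def by simp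
  have nomF: "nominatable (F n) (V n) (V n)" for n
    unfolding F_def by (rule nom_return[OF finV finV wf1 wf2 fst1 fst2])
  have nomF': "nominatable (F' n) (V n) (V n)" for n
    using PG[of n] unfolding F'_def P_def by (intro nom_return[OF finV finV wf1]) (auto simp: fst1)
  have main: "tv_dist (map_pmf (\<lambda>p. h_count (\<Phi> n) (k n) (Vs n) (fst p) ob (snd p)) (F n))
                   (map_pmf (\<lambda>p. h_count (\<Phi> n) (k n) (Vs n) (fst p) ob (snd p)) (F' n)) > 0 \<and>
           map_pmf (\<lambda>p. hh n (fst p) (relabel ob (snd p)) (Vs n)) (F n)
         = map_pmf (\<lambda>p. hh n (fst p) (relabel ob (snd p)) (Vs n)) (F' n)"
    if ob: "obfuscating ob (V n) (V n)" for n ob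
  proof
    have "h_count (\<Phi> n) (k n) (Vs n) (g1 n) ob (spider (M n)) \<noteq> h_count (\<Phi> n) (k n) (Vs n) (g1 n) ob (G n)"
      using PG[of n] ob unfolding P_def by blast
    then show "tv_dist (map_pmf (\<lambda>p. h_count (\<Phi> n) (k n) (Vs n) (fst p) ob (snd p)) (F n))
                   (map_pmf (\<lambda>p. h_count (\<Phi> n) (k n) (Vs n) (fst p) ob (snd p)) (F' n)) > 0"
      unfolding F_def F'_def by (simp add: tv_pos)
    have "hh n (g1 n) (relabel ob (spider (M n))) (Vs n) = hh n (g1 n) (relabel ob (G n)) (Vs n)"
    proof -
      have "wf_graph (g1 n) \<and> wf_graph (spider (M n)) \<and> wf_graph (G n)
      \<and> fst (G n) = fst (spider (M n)) \<and> graph_iso (spider (M n)) (G n) \<and> obfuscating ob (fst (g1 n)) (fst (spider (M n)))"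
        using PG[of n] wf1 wf2 ob fst1 fst2 unfolding P_def by simp
      then show ?thesis
        using spec[OF spec[OF spec[OF spec[OF spec[OF assms(5)[unfolded label_agnostic_def], of n], of "g1 n"], of "spider (M n)"], of "G n"], of ob]
        by (rule rev_mp)
    qed
    then show "map_pmf (\<lambda>p. hh n (fst p) (relabel ob (snd p)) (Vs n)) (F n)
         = map_pmf (\<lambda>p. hh n (fst p) (relabel ob (snd p)) (Vs n)) (F' n)"
      unfolding F_def F'_def by simp
  qed
  have VsV: "Vs n \<subseteq> V n \<inter> V n" for n using VsM[of n] unfolding V_def by auto
  show ?thesis
    apply (rule exI[of _ F], rule exI[of _ V], rule exI[of _ V])
    apply (rule exI[of _ F'], rule exI[of _ V], rule exI[of _ V])
    using nomF nomF' nc VsV main by blast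
qed

end
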